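(* Let $F=\mathbb{Q}(\sqrt d)$ be an imaginary quadratic field, $\Lambda$ a Hermitian lattice over $\mathcal{O}_F$ of signature $(1,n)$ with associated quadratic lattice $\Lambda_Q$ and natural embedding $\iota:D_\Lambda\hookrightarrow\mathcal{D}_{\Lambda_Q}$. Let $r\in\Lambda$ be primitive with $\langle r,r\rangle<0$. Then: (i) the special divisor $H(r)$ is contained in exactly $\frac{\#\mathcal{O}_F^\times}{2}$ special divisors of the form $\mathcal{H}(r')\subset\mathcal{D}_{\Lambda_Q}$ with $r'\in\Lambda_Q$ primitive; (ii) the restriction $\mathcal{H}(r)|_{D_\Lambda}$ (pullback along $\iota$) equals $H(r)$ with multiplicity $1$, i.e. it is reduced.
   Context: $\delta$ is the inverse different of $F$ ($\frac{1}{2\sqrt d}$ if $d\equiv2,3\bmod4$, $\frac1{\sqrt d}$ if $d\equiv1\bmod4$). A Hermitian lattice over $\mathcal{O}_F$ is a finite free $\mathcal{O}_F$-module with a $\delta\mathcal{O}_F$-valued Hermitian form $\langle\,,\rangle$; its associated quadratic lattice $\Lambda_Q$ is the same $\mathbb{Z}$-module with $(\,,)=\mathrm{Tr}_{F/\mathbb{Q}}\langle\,,\rangle$. $D_\Lambda=\{v\in\mathbb{P}(\Lambda\otimes_{\mathcal{O}_F}\mathbb{C}):\langle v,v\rangle>0\}$, $H(r)=\{v\in D_\Lambda:\langle v,r\rangle=0\}$; $\mathcal{D}_{\Lambda_Q}$ is the connected component of $\{v\in\mathbb{P}(\Lambda_Q\otimes\mathbb{C}):(v,v)=0,(v,\bar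 v)>0\}$ containing $\iota(D_\Lambda)$, and $\mathcal{H}(r')=\{v\in\mathcal{D}_{\Lambda_Q}:(v,r')=0\}$.
   Formalization: In (i) the special divisors $\mathcal{H}(r')$ counted are those with $r'\in\Lambda_Q$ primitive and of the same norm as r, $(r',r')=(r,r)$. The statement above fails without it. *)

theory Defs
  imports "HOL-Analysis.Analysis" "HOL-Computational_Algebra.Squarefree"
begin

definition sqrtd :: "int \<Rightarrow> complex" where
  "sqrtd d = \<i> * complex_of_real (sqrt (real_of_int (- d)))"

definition omegaF :: "int \<Rightarrow> complex" where
  "omegaF d = (if d mod 4 = 1 then (1 + sqrtd d) / 2 else sqrtd d)"

definition OF :: "int \<Rightarrow> complex set" where
  "OF d = {of_int a + of_int b * omegaF d | a b. True}"

text \<open>Inverse different delta.\<close>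
definition deltaF :: "int \<Rightarrow> complex" where
  "deltaF d = (if d mod 4 = 1 then 1 / sqrtd d else 1 / (2 * sqrtd d))"

definition unitsOF :: "int \<Rightarrow> complex set" where
  "unitsOF d = {u \<in> OF d. \<exists>v \<in> OF d. u * v = 1}"

section \<open>Hermitian lattice Lambda = O_F^m (free), form given by a Gram matrix A\<close>

definition lattice :: "int \<Rightarrow> (complex^'m) set" where
  "lattice d = {x. \<forall>i. x $ i \<in> OF d}"

definition herm :: "complex^'m^'m \<Rightarrow> complex^'m \<Rightarrow> complex^'m \<Rightarrow> complex" where
  "herm A x y = (\<Sum>i\<in>UNIV. \<Sum>j\<in>UNIV. x $ i * A $ i $ j * cnj (y $ j))"

definition hermitian_mat :: "complex^'m^'m \<Rightarrow> bool" where
  "hermitian_mat A \<longleftrightarrow> (\<forall>i j. A $ i $ j = cnj (A $ j $ i))"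

definition herm_lattice :: "int \<Rightarrow> complex^'m^'m \<Rightarrow> bool" where
  "herm_lattice d A \<longleftrightarrow> hermitian_mat A \<and>
     (\<forall>x\<in>lattice d. \<forall>y\<in>lattice d. herm A x y \<in> (\<lambda>z. deltaF d * z) ` OF d)"

definition conj_transpose :: "complex^'m^'n \<Rightarrow> complex^'n^'m" where
  "conj_transpose P = (\<chi> i j. cnj (P $ j $ i))"

text \<open>Signature (1,n) with n = CARD('m) - 1 (Sylvester normal form diag(1,-1,...,-1)).\<close>
definition signature_1n :: "complex^'m^'m \<Rightarrow> bool" where
  "signature_1n A \<longleftrightarrow> (\<exists>(P::complex^'m^'m) i0. invertible P \<and>
     (\<forall>i j. (conj_transpose P ** A ** P) $ i $ j =
              (if i = j then (if i = i0 then 1 else -1) else 0)))"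

definition primitive_OF :: "int \<Rightarrow> complex^'m \<Rightarrow> bool" where
  "primitive_OF d r \<longleftrightarrow> r \<noteq> 0 \<and> (\<forall>c::complex. c *s r \<in> lattice d \<longrightarrow> c \<in> OF d)"

text \<open>y is primitive in Lambda_Q (as Z-module, same underlying set as Lambda).\<close>
definition primitive_Z :: "int \<Rightarrow> complex^'m \<Rightarrow> bool" where
  "primitive_Z d y \<longleftrightarrow> y \<noteq> 0 \<and>
     (\<forall>c::real. complex_of_real c *s y \<in> lattice d \<longrightarrow> c \<in> \<int>)"

text \<open>D_Lambda, as the cone of representatives in C^m (projectivisation implicit).\<close>
definition DLam :: "complex^'m^'m \<Rightarrow> (complex^'m) set" where
  "DLam A = {v. 0 < Re (herm A v v)}"

definition Hdiv :: "complex^'m^'m \<Rightarrow> complex^'m \<Rightarrow> (complex^'m) set" where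
  "Hdiv A r = {v \<in> DLam A. herm A v r = 0}"

text \<open>Lambda_Q tensor C is modelled as pairs (a,b) of vectors in C^m: the real point of
  x \<in> C^m = Lambda tensor R is (Re x, Im x).  QB is the C-bilinear extension of
  Tr_{F/Q} herm (i.e. of 2 Re herm).\<close>
definition realpt :: "complex^'m \<Rightarrow> (complex^'m) \<times> (complex^'m)" where
  "realpt x = ((\<chi> i. complex_of_real (Re (x $ i))), (\<chi> i. complex_of_real (Im (x $ i))))"

definition QB :: "complex^'m^'m \<Rightarrow> (complex^'m) \<times> (complex^'m) \<Rightarrow> (complex^'m) \<times> (complex^'m) \<Rightarrow> complex" where
  "QB A p q = (let (a, b) = p; (c, e) = q in
     (\<Sum>i\<in>UNIV. \<Sum>j\<in>UNIV. (a $ i + \<i> * b $ i) * A $ i $ j * (c $ j - \<i> * e $ j))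
   + (\<Sum>i\<in>UNIV. \<Sum>j\<in>UNIV. (a $ i - \<i> * b $ i) * cnj (A $ i $ j) * (c $ j + \<i> * e $ j)))"

definition cnjp :: "(complex^'m) \<times> (complex^'m) \<Rightarrow> (complex^'m) \<times> (complex^'m)" where
  "cnjp p = ((\<chi> i. cnj (fst p $ i)), (\<chi> i. cnj (snd p $ i)))"

definition iota :: "complex^'m \<Rightarrow> (complex^'m) \<times> (complex^'m)" where
  "iota v = ((1/2) *s v, (- \<i> / 2) *s v)"

definition ConeQ :: "complex^'m^'m \<Rightarrow> ((complex^'m) \<times> (complex^'m)) set" where
  "ConeQ A = {w. QB A w w = 0 \<and> Im (QB A w (cnjp w)) = 0 \<and> 0 < Re (QB A w (cnjp w))}"

definition DQ :: "complex^'m^'m \<Rightarrow> ((complex^'m) \<times> (complex^'m)) set" where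
  "DQ A = \<Union> {connected_component_set (ConeQ A) w | w. w \<in> iota ` DLam A}"

definition HQ :: "complex^'m^'m \<Rightarrow> (complex^'m) \<times> (complex^'m) \<Rightarrow> ((complex^'m) \<times> (complex^'m)) set" where
  "HQ A r' = {w \<in> DQ A. QB A w r' = 0}"

definition vanishes_simply :: "(complex^'m \<Rightarrow> complex) \<Rightarrow> (complex^'m) set \<Rightarrow> bool" where
  "vanishes_simply g S \<longleftrightarrow> (\<forall>v\<in>S. g v = 0 \<and>
      (\<exists>g'. (g has_derivative g') (at v) \<and> (\<exists>u. g' u \<noteq> 0)))"

end

theory Submission
  imports Defs
begin

definition cnjv :: "complex^'m \<Rightarrow> complex^'m" where
  "cnjv x = (\<chi> i. cnj (x $ i))"

lemma cnjv_nth[simp]: "cnjv x $ i = cnj (x $ i)" by (simp add: cnjv_def)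
lemma cnjv_zero[simp]: "cnjv 0 = 0" by (simp add: vec_eq_iff)
lemma cnjv_cnjv[simp]: "cnjv (cnjv x) = x" by (simp add: vec_eq_iff)

lemma herm_add_left: "herm A (x + y) z = herm A x z + herm A y z"
  by (simp add: herm_def distrib_right sum.distrib)
lemma herm_add_right: "herm A z (x + y) = herm A z x + herm A z y"
  by (simp add: herm_def distrib_left sum.distrib)
lemma herm_diff_left: "herm A (x - y) z = herm A x z - herm A y z"
  by (simp add: herm_def left_diff_distrib sum_subtractf)
lemma herm_diff_right: "herm A z (x - y) = herm A z x - herm A z y"
  by (simp add: herm_def right_diff_distrib sum_subtractf)
lemma herm_scale_left: "herm A (c *s x) z = c * herm A x z"
  by (simp add: herm_def sum_distrib_left mult.assoc)
lemma herm_scale_right: "herm A z (c *s x) = cnj c * herm A z x"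
  by (simp add: herm_def sum_distrib_left mult_ac)
lemma herm_zero_left[simp]: "herm A 0 z = 0" by (simp add: herm_def)
lemma herm_zero_right[simp]: "herm A z 0 = 0" by (simp add: herm_def)
lemma herm_sym: "hermitian_mat A \<Longrightarrow> cnj (herm A x y) = herm A y x"
proof -
  assume h: "hermitian_mat A"
  have 1: "cnj (herm A x y) = (\<Sum>i\<in>UNIV. \<Sum>j\<in>UNIV. cnj (x$i) * cnj (A$i$j) * y$j)"
    unfolding herm_def cnj_sum complex_cnj_mult complex_cnj_cnj by (rule refl)
  have 2: "herm A y x = (\<Sum>j\<in>UNIV. \<Sum>i\<in>UNIV. y$i * A$i$j * cnj (x$j))"
    unfolding herm_def by (rule sum.swap)
  have 3: "cnj (A$i$j) = A$j$i" for i j using h unfolding hermitian_mat_def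
    by (metis complex_cnj_cnj)
  show ?thesis unfolding 1 2 3 by (intro sum.cong refl) (simp only: mult.commute mult.left_commute)
qed

lemma herm_real: "hermitian_mat A \<Longrightarrow> Im (herm A x x) = 0"
proof -
  assume "hermitian_mat A"
  from herm_sym[OF this, of x x] have "Im (cnj (herm A x x)) = Im (herm A x x)" by simp
  then show ?thesis by simp
qed
lemma herm_real': "hermitian_mat A \<Longrightarrow> herm A x x = complex_of_real (Re (herm A x x))"
  by (simp add: complex_eq_iff herm_real)

definition mk :: "complex^'m \<Rightarrow> complex^'m \<Rightarrow> (complex^'m) \<times> (complex^'m)" where
  "mk p q = ((1/2) *s (p + q), (- \<i>/2) *s (p - q))"

lemma QB_pair: "QB A (a,b) (c,e) = (\<Sum>i\<in>UNIV. \<Sum>j\<in>UNIV. (a $ i + \<i> * b $ i) * A $ i $ j * (c $ j - \<i> * e $ j))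
   + (\<Sum>i\<in>UNIV. \<Sum>j\<in>UNIV. (a $ i - \<i> * b $ i) * cnj (A $ i $ j) * (c $ j + \<i> * e $ j))"
  unfolding QB_def Let_def prod.case by (rule refl)

lemma QB_mk: "QB A (mk p q) (mk p2 q2) = herm A p (cnjv q2) + cnj (herm A (cnjv q) p2)"
proof -
  obtain a b where ab: "mk p q = (a, b)" by (cases "mk p q")
  obtain c e where ce: "mk p2 q2 = (c, e)" by (cases "mk p2 q2")
  have a: "a = (1/2) *s (p + q)" and b: "b = (- \<i>/2) *s (p - q)" using ab by (auto simp: mk_def)
  have e1: "a$i + \<i> * b$i = p$i" "a$i - \<i> * b$i = q$i" for i
    unfolding a b by (simp_all add: field_simps)
  have c: "c = (1/2) *s (p2 + q2)" and e: "e = (- \<i>/2) *s (p2 - q2)" using ce by (auto simp: mk_def)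
  have e2: "c$i - \<i> * e$i = q2$i" "c$i + \<i> * e$i = p2$i" for i
    unfolding c e by (simp_all add: field_simps)
  have 1: "(\<Sum>i\<in>UNIV. \<Sum>j\<in>UNIV. (a $ i + \<i> * b $ i) * A $ i $ j * (c $ j - \<i> * e $ j))
      = herm A p (cnjv q2)"
    unfolding herm_def by (simp only: e1 e2 cnjv_nth complex_cnj_cnj)
  have 2: "(\<Sum>i\<in>UNIV. \<Sum>j\<in>UNIV. (a $ i - \<i> * b $ i) * cnj (A $ i $ j) * (c $ j + \<i> * e $ j))
      = cnj (herm A (cnjv q) p2)"
    unfolding herm_def by (simp only: e1 e2 cnjv_nth complex_cnj_cnj cnj_sum complex_cnj_mult)
  show ?thesis
  proof -
    have "QB A (mk p q) (mk p2 q2) = QB A (a,b) (c,e)" by (simp only: ab ce)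
    also have "\<dots> = herm A p (cnjv q2) + cnj (herm A (cnjv q) p2)"
      unfolding QB_pair 1 2 by (rule refl)
    finally show ?thesis .
  qed
qed

lemma mk_surj: "w = mk (fst w + \<i> *s snd w) (fst w - \<i> *s snd w)"
  by (cases w) (simp add: mk_def vec_eq_iff field_simps)

lemma realpt_mk: "realpt y = mk y (cnjv y)"
  unfolding realpt_def mk_def
  by (simp add: vec_eq_iff field_simps complex_eq_iff)

lemma cnjp_mk: "cnjp (mk p q) = mk (cnjv q) (cnjv p)"
  unfolding cnjp_def mk_def
  by (simp add: vec_eq_iff field_simps complex_eq_iff)

lemma iota_mk: "iota v = mk v 0"
  unfolding iota_def mk_def by (simp add: vec_eq_iff)

lemma QB_realpt: "QB A w (realpt y) = herm A (fst w + \<i> *s snd w) y + cnj (herm A (cnjv (fst w - \<i> *s snd w)) y)"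
  by (subst mk_surj[of w]) (simp add: realpt_mk QB_mk)

lemma QB_iota: "QB A (iota v) (realpt y) = herm A v y"
  by (simp add: iota_mk realpt_mk QB_mk)

lemma M_entry: "(conj_transpose P ** A ** P)$i$j = (\<Sum>k\<in>UNIV. \<Sum>l\<in>UNIV. cnj (P$k$i) * A$k$l * P$l$j)"
proof -
  have "(conj_transpose P ** A ** P)$i$j = (\<Sum>l\<in>UNIV. \<Sum>k\<in>UNIV. cnj (P$k$i) * A$k$l * P$l$j)"
    by (simp add: matrix_matrix_mult_def conj_transpose_def sum_distrib_right)
  also have "\<dots> = (\<Sum>k\<in>UNIV. \<Sum>l\<in>UNIV. cnj (P$k$i) * A$k$l * P$l$j)"
    by (rule sum.swap)
  finally show ?thesis .
qed

lemma sig_pos: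
  assumes "signature_1n A" shows "\<exists>p. 0 < Re (herm A p p)"
proof -
  obtain P :: "complex^'a^'a" and i0 where M: "\<forall>i j. (conj_transpose P ** A ** P) $ i $ j =
              (if i = j then (if i = i0 then 1 else -1) else 0)"
    using assms unfolding signature_1n_def by blast
  define p where "p = (\<chi> k. cnj (P$k$i0))"
  have "herm A p p = (conj_transpose P ** A ** P)$i0$i0"
    unfolding M_entry herm_def p_def by simp
  also have "\<dots> = 1" using M by simp
  finally have "herm A p p = 1" .
  then show ?thesis by (intro exI[of _ p]) simp
qed

lemma sum_delta_mult: "(\<Sum>k\<in>(UNIV::'a::finite set). (if k = i then c else 0) * f k) = c * (f i :: complex)"
proof -
  have e: "(\<lambda>k. (if k = i then c else 0) * f k) = (\<lambda>k. if k = i then c * f k else 0)" by auto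
  show ?thesis unfolding e by simp
qed

lemma herm_axis: "herm A (axis i 1) y = (A *v cnjv y) $ i"
proof -
  have "herm A (axis i 1) y = (\<Sum>ia\<in>UNIV. axis i 1 $ ia * (\<Sum>j\<in>UNIV. A$ia$j * cnj (y$j)))"
    unfolding herm_def by (simp add: sum_distrib_left mult.assoc)
  also have "\<dots> = (\<Sum>j\<in>UNIV. A$i$j * cnj (y$j))"
    unfolding axis_def by (simp add: sum_delta_mult)
  finally show ?thesis by (simp add: matrix_vector_mult_def)
qed

lemma sig_nondeg:
  assumes "signature_1n A" and h: "\<forall>z. herm A z y = 0" shows "y = 0"
proof -
  obtain P :: "complex^'a^'a" and i0 where inv: "invertible P" and M: "\<forall>i j. (conj_transpose P ** A ** P) $ i $ j =
              (if i = j then (if i = i0 then 1 else -1) else 0)"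
    using assms unfolding signature_1n_def by blast
  obtain P' where PP: "P ** P' = mat 1" using inv unfolding invertible_def by blast
  have x0: "A *v cnjv y = 0" using h herm_axis[of A _ y] by (simp add: vec_eq_iff)
  define w where "w = P' *v cnjv y"
  have Pw: "P *v w = cnjv y" unfolding w_def by (simp add: matrix_vector_mul_assoc PP)
  have "(conj_transpose P ** A ** P) *v w = conj_transpose P *v (A *v (P *v w))"
    by (simp add: matrix_vector_mul_assoc matrix_mul_assoc)
  also have "\<dots> = 0" by (simp add: Pw x0)
  finally have Mw: "(conj_transpose P ** A ** P) *v w = 0" .
  have "w $ i = 0" for i
  proof -
    have "((conj_transpose P ** A ** P) *v w) $ i = (\<Sum>j\<in>UNIV. (if j = i then (if i = i0 then 1 else -1) else 0) * w $ j)"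
      unfolding matrix_vector_mult_def vec_lambda_beta using M by (intro sum.cong refl) auto
    also have "\<dots> = (if i = i0 then 1 else -1) * w $ i" by (rule sum_delta_mult)
    finally have "((conj_transpose P ** A ** P) *v w) $ i = (if i = i0 then 1 else -1) * w $ i" .
    then show ?thesis using Mw by (auto split: if_splits)
  qed
  then have "w = 0" by (simp add: vec_eq_iff)
  then have "cnjv y = 0" using Pw by simp
  then show ?thesis by (metis cnjv_cnjv cnjv_zero)
qed

definition tF :: "int \<Rightarrow> int" where "tF d = (if d mod 4 = 1 then 1 else 0)"
definition mF :: "int \<Rightarrow> int" where "mF d = (if d mod 4 = 1 then (d - 1) div 4 else d)"

lemma sqrt_sq_d: "d < 0 \<Longrightarrow> sqrt (real_of_int (- d)) * sqrt (real_of_int (- d)) = - real_of_int d"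
  by simp

lemma omega_cases:
  assumes "d < 0"
  shows "omegaF d * omegaF d = of_int (mF d) + of_int (tF d) * omegaF d
       \<and> cnj (omegaF d) = of_int (tF d) - omegaF d \<and> Im (omegaF d) \<noteq> 0"
proof (cases "d mod 4 = 1")
  case True
  define s where "s = sqrt (real_of_int (- d))"
  have ss: "s * s = - real_of_int d" unfolding s_def using assms by simp
  have sp: "s > 0" unfolding s_def using assms by simp
  obtain k where k: "d = 4 * k + 1" using True by (metis mult.commute div_mult_mod_eq add.commute)
  have mk: "mF d = k" unfolding mF_def using True k by simp
  have om: "omegaF d = Complex (1/2) (s/2)"
    unfolding omegaF_def sqrtd_def s_def using True by (simp add: complex_eq_iff)
  have ssk: "s * s = - 4 * real_of_int k - 1" using ss k by simp
  show ?thesis unfolding om mk tF_def using True sp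
    by (simp add: complex_eq_iff ssk field_simps)
next
  case False
  define s where "s = sqrt (real_of_int (- d))"
  have ss: "s * s = - real_of_int d" unfolding s_def using assms by simp
  have sp: "s > 0" unfolding s_def using assms by simp
  have om: "omegaF d = Complex 0 s"
    unfolding omegaF_def sqrtd_def s_def using False by (simp add: complex_eq_iff)
  show ?thesis unfolding om mF_def tF_def using False sp
    by (simp add: complex_eq_iff ss)
qed

lemma OF_iff: "c \<in> OF d \<longleftrightarrow> (\<exists>a b. c = of_int a + of_int b * omegaF d)"
  unfolding OF_def by auto

lemma OF_add: "x \<in> OF d \<Longrightarrow> y \<in> OF d \<Longrightarrow> x + y \<in> OF d"
proof -
  assume "x \<in> OF d" "y \<in> OF d"
  then obtain a b a' b' where "x = of_int a + of_int b * omegaF d" "y = of_int a' + of_int b' * omegaF d"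
    unfolding OF_iff by blast
  then have "x + y = of_int (a + a') + of_int (b + b') * omegaF d" by (simp add: algebra_simps)
  then show ?thesis unfolding OF_iff by blast
qed

lemma OF_uminus: "x \<in> OF d \<Longrightarrow> - x \<in> OF d"
proof -
  assume "x \<in> OF d"
  then obtain a b where "x = of_int a + of_int b * omegaF d" unfolding OF_iff by blast
  then have "- x = of_int (- a) + of_int (- b) * omegaF d" by (simp add: algebra_simps)
  then show ?thesis unfolding OF_iff by blast
qed

lemma OF_int: "of_int a \<in> OF d"
  unfolding OF_iff by (intro exI[of _ a] exI[of _ 0]) simp

lemma OF_mult: "d < 0 \<Longrightarrow> x \<in> OF d \<Longrightarrow> y \<in> OF d \<Longrightarrow> x * y \<in> OF d"
proof -
  assume d: "d < 0" and "x \<in> OF d" "y \<in> OF d"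
  then obtain a b a' b' where xy: "x = of_int a + of_int b * omegaF d" "y = of_int a' + of_int b' * omegaF d"
    unfolding OF_iff by blast
  have sq: "omegaF d * omegaF d = of_int (mF d) + of_int (tF d) * omegaF d" using omega_cases[OF d] by blast
  have "x * y = of_int a * of_int a' + (of_int a * of_int b' + of_int a' * of_int b) * omegaF d
      + of_int b * of_int b' * (omegaF d * omegaF d)" unfolding xy by (simp add: algebra_simps)
  also have "\<dots> = of_int (a * a' + b * b' * mF d) + of_int (a * b' + a' * b + b * b' * tF d) * omegaF d"
    unfolding sq by (simp add: algebra_simps)
  finally show ?thesis unfolding OF_iff by blast
qed

lemma OF_cnj: "d < 0 \<Longrightarrow> x \<in> OF d \<Longrightarrow> cnj x \<in> OF d"
proof -
  assume d: "d < 0" and "x \<in> OF d"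
  then obtain a b where x: "x = of_int a + of_int b * omegaF d" unfolding OF_iff by blast
  have c: "cnj (omegaF d) = of_int (tF d) - omegaF d" using omega_cases[OF d] by blast
  have "cnj x = of_int (a + b * tF d) + of_int (- b) * omegaF d"
    unfolding x by (simp add: c algebra_simps)
  then show ?thesis unfolding OF_iff by blast
qed

lemma OF_real: "d < 0 \<Longrightarrow> x \<in> OF d \<Longrightarrow> Im x = 0 \<Longrightarrow> x = of_int (\<lfloor>Re x\<rfloor>)"
proof -
  assume d: "d < 0" and "x \<in> OF d" and im: "Im x = 0"
  then obtain a b where x: "x = of_int a + of_int b * omegaF d" unfolding OF_iff by blast
  have "Im (omegaF d) \<noteq> 0" using omega_cases[OF d] by blast
  then have "b = 0" using im unfolding x by simp
  then show ?thesis unfolding x by simp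
qed

lemma OF_norm: "d < 0 \<Longrightarrow> x \<in> OF d \<Longrightarrow> \<exists>n::int. x * cnj x = of_int n"
proof -
  assume d: "d < 0" and "x \<in> OF d"
  then obtain a b where x: "x = of_int a + of_int b * omegaF d" unfolding OF_iff by blast
  have c: "cnj (omegaF d) = of_int (tF d) - omegaF d"
    and sq: "omegaF d * omegaF d = of_int (mF d) + of_int (tF d) * omegaF d" using omega_cases[OF d] by blast+
  have "x * cnj x = (of_int a + of_int b * omegaF d) * (of_int (a + b * tF d) - of_int b * omegaF d)"
    unfolding x by (simp add: c algebra_simps)
  also have "\<dots> = of_int a * of_int (a + b * tF d) + (of_int b * of_int (a + b * tF d) - of_int a * of_int b) * omegaF d
      - of_int b * of_int b * (omegaF d * omegaF d)" by (simp add: algebra_simps)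
  also have "\<dots> = of_int (a * a + a * b * tF d - b * b * mF d)"
    unfolding sq by (simp add: algebra_simps)
  finally show ?thesis by blast
qed

lemma units_iff: "d < 0 \<Longrightarrow> c \<in> unitsOF d \<longleftrightarrow> c \<in> OF d \<and> c * cnj c = 1"
proof
  assume d: "d < 0" and "c \<in> unitsOF d"
  then obtain v where c: "c \<in> OF d" and v: "v \<in> OF d" and cv: "c * v = 1" unfolding unitsOF_def by blast
  obtain n where n: "c * cnj c = of_int n" using OF_norm[OF d c] by blast
  obtain k where k: "v * cnj v = of_int k" using OF_norm[OF d v] by blast
  have "(c * cnj c) * (v * cnj v) = (c * v) * cnj (c * v)" by simp
  then have "of_int (n * k) = (1::complex)" using n k cv by simp
  then have nk: "n * k = 1" by (metis of_int_eq_1_iff)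
  have "complex_of_real ((cmod c)^2) = of_int n" by (metis n complex_norm_square)
  then have "Re (complex_of_real ((cmod c)^2)) = Re (of_int n)" by simp
  then have "(cmod c)^2 = of_int n" by simp
  then have "n \<ge> 0" by (metis of_int_0_le_iff zero_le_power2)
  then have "n = 1" using nk zmult_eq_1_iff[of n k] by auto
  then show "c \<in> OF d \<and> c * cnj c = 1" using c n by simp
next
  assume d: "d < 0" and "c \<in> OF d \<and> c * cnj c = 1"
  then show "c \<in> unitsOF d" unfolding unitsOF_def using OF_cnj[OF d] by blast
qed

lemma herm_real_of: "hermitian_mat A \<Longrightarrow> cnj (herm A x x) = herm A x x"
  using herm_sym by blast

lemma herm_lin2: "herm A (a *s p + x) (a *s p + x)
   = a * cnj a * herm A p p + a * herm A p x + cnj a * herm A x p + herm A x x"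
  by (simp add: herm_add_left herm_add_right herm_scale_left herm_scale_right algebra_simps)

lemma exists_lambda: "(P::real) > 0 \<Longrightarrow> \<exists>l. l * l * P + 2 * l * B + C > 0"
proof -
  assume P: "P > 0"
  define l where "l = 1 + (2 * \<bar>B\<bar> + \<bar>C\<bar>) / P"
  have l1: "l \<ge> 1" unfolding l_def using P by simp
  have lP: "l * P = P + 2 * \<bar>B\<bar> + \<bar>C\<bar>" unfolding l_def using P by (simp add: field_simps)
  have eq: "l * l * P = l * P + 2 * (l * \<bar>B\<bar>) + l * \<bar>C\<bar>"
    using lP by (simp add: mult.assoc distrib_left)
  have a1: "(l - 1) * P \<ge> 0" using l1 P by simp
  have a2: "(l - 1) * \<bar>C\<bar> \<ge> 0" using l1 by simp
  have a3: "l * (\<bar>B\<bar> + B) \<ge> 0" using l1 by simp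
  have a1': "l * P - P \<ge> 0" using a1 by (simp add: left_diff_distrib)
  have a2': "l * \<bar>C\<bar> - \<bar>C\<bar> \<ge> 0" using a2 by (simp add: left_diff_distrib)
  have a3': "l * \<bar>B\<bar> + l * B \<ge> 0" using a3 by (simp add: distrib_left)
  have "l * l * P + 2 * (l * B) + C > 0" using eq a1' a2' a3' P abs_ge_minus_self[of C] by linarith
  then show ?thesis by (intro exI[of _ l]) (simp add: mult.assoc)
qed

lemma proj_perp:
  assumes h: "hermitian_mat A" and N: "Re (herm A r r) < 0"
  shows "herm A (z - (herm A z r / herm A r r) *s r) r = 0"
proof -
  have "herm A r r \<noteq> 0" using N by auto
  then show ?thesis by (simp add: herm_diff_left herm_scale_left)
qed

lemma proj_pos:
  assumes h: "hermitian_mat A" and N: "Re (herm A r r) < 0"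
  shows "Re (herm A (p - (herm A p r / herm A r r) *s r) (p - (herm A p r / herm A r r) *s r)) \<ge> Re (herm A p p)"
proof -
  define n where "n = Re (herm A r r)"
  have Nn: "herm A r r = of_real n" unfolding n_def using herm_real'[OF h] by blast
  define hh where "hh = herm A p r"
  define p0 where "p0 = p - (hh / of_real n) *s r"
  have perp: "herm A p0 r = 0" unfolding p0_def hh_def using proj_perp[OF h N, of p] Nn by simp
  have perp2: "herm A r p0 = 0" using herm_sym[OF h, of p0 r] perp by simp
  have "herm A p0 p0 = herm A p p0 - (hh / of_real n) * herm A r p0"
    by (subst (1) p0_def) (simp only: herm_diff_left herm_scale_left)
  also have "\<dots> = herm A p p0" using perp2 by simp
  also have "\<dots> = herm A p p - cnj (hh / of_real n) * hh"
    unfolding p0_def by (simp add: herm_diff_right herm_scale_right hh_def)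
  also have "cnj (hh / of_real n) * hh = of_real ((cmod hh)^2 / n)"
  proof -
    have "cnj (hh / of_real n) * hh = (hh * cnj hh) / of_real n" by (simp add: mult.commute)
    also have "\<dots> = of_real ((cmod hh)^2) / of_real n" by (simp only: complex_norm_square)
    also have "\<dots> = of_real ((cmod hh)^2 / n)" by (simp only: of_real_divide)
    finally show ?thesis .
  qed
  finally have "Re (herm A p0 p0) = Re (herm A p p) - (cmod hh)^2 / n" by simp
  moreover have "(cmod hh)^2 / n \<le> 0" using N n_def by (simp add: divide_nonneg_neg)
  ultimately show ?thesis unfolding p0_def hh_def Nn by simp
qed

lemma exists_hdiv_big:
  assumes h: "hermitian_mat A" and N: "Re (herm A r r) < 0" and sig: "signature_1n A"
  shows "\<exists>p0. herm A p0 r = 0 \<and> Re (herm A p0 p0) > K"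
proof -
  obtain p where p: "0 < Re (herm A p p)" using sig_pos[OF sig] by blast
  define p1 where "p1 = p - (herm A p r / herm A r r) *s r"
  have p1r: "herm A p1 r = 0" unfolding p1_def using proj_perp[OF h N] .
  have P: "Re (herm A p1 p1) > 0" unfolding p1_def using proj_pos[OF h N, of p] p by linarith
  define l where "l = 1 + \<bar>K\<bar> / Re (herm A p1 p1)"
  have l1: "l \<ge> 1" unfolding l_def using P by simp
  have lP: "l * Re (herm A p1 p1) = Re (herm A p1 p1) + \<bar>K\<bar>" unfolding l_def using P by (simp add: field_simps)
  have "herm A (of_real l *s p1) (of_real l *s p1) = of_real (l * l) * herm A p1 p1"
    by (simp add: herm_scale_left herm_scale_right)
  then have "Re (herm A (of_real l *s p1) (of_real l *s p1)) = l * (l * Re (herm A p1 p1))" by simp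
  also have "\<dots> \<ge> l * Re (herm A p1 p1)" using l1 lP P by (simp add: mult_le_cancel_right1)
  finally have "Re (herm A (of_real l *s p1) (of_real l *s p1)) > K" using lP P by linarith
  moreover have "herm A (of_real l *s p1) r = 0" using p1r by (simp add: herm_scale_left)
  ultimately show ?thesis by blast
qed

lemma perp_span:
  assumes h: "hermitian_mat A" and N: "Re (herm A r r) < 0" and sig: "signature_1n A"
    and Y: "\<And>v. 0 < Re (herm A v v) \<Longrightarrow> herm A v r = 0 \<Longrightarrow> herm A v y = 0"
  shows "y = (herm A y r / herm A r r) *s r"
proof -
  define n where "n = Re (herm A r r)"
  have Nn: "herm A r r = of_real n" unfolding n_def using herm_real'[OF h] by blast
  have n0: "n \<noteq> 0" using N n_def by simp
  obtain p0 where p0r: "herm A p0 r = 0" and P: "Re (herm A p0 p0) > 0"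
    using exists_hdiv_big[OF h N sig, of 0] by blast
  have p0y: "herm A p0 y = 0" using Y[OF P p0r] .
  have hx: "herm A x y = 0" if xr: "herm A x r = 0" for x
  proof -
    obtain l where l: "l * l * Re (herm A p0 p0) + 2 * l * Re (herm A p0 x) + Re (herm A x x) > 0"
      using exists_lambda[OF P] by blast
    define v where "v = of_real l *s p0 + x"
    have "herm A v v = of_real (l * l) * herm A p0 p0 + of_real l * (herm A p0 x + cnj (herm A p0 x)) + herm A x x"
      unfolding v_def herm_lin2 herm_sym[OF h] by (simp add: algebra_simps)
    then have "Re (herm A v v) = l * l * Re (herm A p0 p0) + 2 * l * Re (herm A p0 x) + Re (herm A x x)"
      by simp
    then have vp: "0 < Re (herm A v v)" using l by simp
    have vr: "herm A v r = 0" unfolding v_def by (simp add: herm_add_left herm_scale_left p0r xr)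
    have "herm A v y = of_real l * herm A p0 y + herm A x y" unfolding v_def by (simp add: herm_add_left herm_scale_left)
    then show ?thesis using Y[OF vp vr] p0y by simp
  qed
  define c where "c = herm A y r / herm A r r"
  have "herm A z (y - c *s r) = 0" for z
  proof -
    have "herm A (z - (herm A z r / herm A r r) *s r) y = 0" using hx[OF proj_perp[OF h N]] .
    then have "herm A z y = (herm A z r / herm A r r) * herm A r y" by (simp add: herm_diff_left herm_scale_left)
    moreover have "cnj c = herm A r y / herm A r r" unfolding c_def Nn
      using herm_sym[OF h, of y r] by simp
    ultimately show ?thesis by (simp add: herm_diff_right herm_scale_right)
  qed
  then show ?thesis using sig_nondeg[OF sig] unfolding c_def by (metis eq_iff_diff_eq_0)
qed

lemma QB_mk_self: "hermitian_mat A \<Longrightarrow> QB A (mk p (cnjv u)) (mk p (cnjv u)) = 2 * herm A p u"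
  by (simp add: QB_mk herm_sym)

lemma QB_mk_cnjp: "QB A (mk p (cnjv u)) (cnjp (mk p (cnjv u))) = herm A p p + cnj (herm A u u)"
  by (simp add: QB_mk cnjp_mk)

lemma cone_mk:
  assumes h: "hermitian_mat A" and "herm A p u = 0" and "0 < Re (herm A p p) + Re (herm A u u)"
  shows "mk p (cnjv u) \<in> ConeQ A"
  unfolding ConeQ_def using assms herm_real[OF h, of p] herm_real[OF h, of u]
  by (simp add: QB_mk_self QB_mk_cnjp)

lemma DQ_I: "w0 \<in> iota ` DLam A \<Longrightarrow> connected_component (ConeQ A) w0 w \<Longrightarrow> w \<in> DQ A"
  unfolding DQ_def by blast

lemma iota_cone: "hermitian_mat A \<Longrightarrow> v \<in> DLam A \<Longrightarrow> iota v \<in> ConeQ A"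
  unfolding iota_mk using cone_mk[of A v 0] by (simp add: DLam_def)

lemma iota_DQ: "hermitian_mat A \<Longrightarrow> v \<in> DLam A \<Longrightarrow> iota v \<in> DQ A"
  by (rule DQ_I[of "iota v"]) (auto intro: connected_component_refl iota_cone)

lemma mk_path: "mk p (cnjv (complex_of_real t *s u)) = mk p 0 + t *\<^sub>R mk 0 (cnjv u)"
proof -
  have sc: "t *\<^sub>R (z::complex) = of_real t * z" for z by (simp add: scaleR_conv_of_real)
  show ?thesis by (simp add: mk_def vec_eq_iff sc algebra_simps)
qed

lemma path_DQ:
  assumes h: "hermitian_mat A" and pp: "0 < Re (herm A p p)" and pu: "herm A p u = 0"
    and pos: "0 < Re (herm A p p) + Re (herm A u u)"
  shows "mk p (cnjv u) \<in> DQ A"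
proof -
  define g where "g = (\<lambda>t::real. mk p 0 + t *\<^sub>R mk 0 (cnjv u))"
  have cont: "continuous_on {0..1} g" unfolding g_def by (intro continuous_intros)
  have conn: "connected (g ` {0..1})" by (rule connected_continuous_image[OF cont connected_Icc])
  have sub: "g ` {0..1} \<subseteq> ConeQ A"
  proof
    fix w assume "w \<in> g ` {0..1}"
    then obtain t where t: "0 \<le> t" "t \<le> 1" and w: "w = g t" by auto
    have w': "w = mk p (cnjv (complex_of_real t *s u))" unfolding w g_def mk_path ..
    have "herm A p (complex_of_real t *s u) = 0" by (simp add: herm_scale_right pu)
    moreover have "Re (herm A (complex_of_real t *s u) (complex_of_real t *s u)) = t * t * Re (herm A u u)"
      by (simp add: herm_scale_left herm_scale_right)
    moreover have "0 < Re (herm A p p) + t * t * Re (herm A u u)"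
    proof (cases "Re (herm A u u) \<ge> 0")
      case True then show ?thesis using pp t by (simp add: add_pos_nonneg)
    next
      case False
      have "t * t \<le> 1" using t by (simp add: mult_le_one)
      then have "t * t * Re (herm A u u) \<ge> Re (herm A u u)" using False
        by (simp add: mult_le_cancel_right1)
      then show ?thesis using pos by linarith
    qed
    ultimately show "w \<in> ConeQ A" unfolding w' by (intro cone_mk[OF h]) auto
  qed
  have g0: "g 0 = iota p" unfolding g_def iota_mk by simp
  have g1: "g 1 = mk p (cnjv u)" unfolding g_def using mk_path[of p 1 u] by simp
  have "connected_component (ConeQ A) (iota p) (mk p (cnjv u))"
    by (rule connected_componentI[OF conn sub]) (auto simp: g0[symmetric] g1[symmetric])
  moreover have "iota p \<in> iota ` DLam A" using pp by (simp add: DLam_def)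
  ultimately show ?thesis by (intro DQ_I)
qed

lemma card_2to1:
  fixes U :: "complex set"
  assumes neg: "\<forall>a\<in>U. -a \<in> U" and z: "0 \<notin> U"
    and F: "\<forall>a\<in>U. \<forall>b\<in>U. F a = F b \<longleftrightarrow> (b = a \<or> b = -a)"
  shows "card (F ` U) = card U div 2"
proof (cases "finite U")
  case False
  then have "infinite (F ` U)"
  proof -
    define h where "h = (\<lambda>x. SOME a. a \<in> U \<and> F a = x)"
    have hU: "h x \<in> U \<and> F (h x) = x" if "x \<in> F ` U" for x
      unfolding h_def using that by (rule imageE) (metis (mono_tags, lifting) someI)
    have "U \<subseteq> h ` (F ` U) \<union> uminus ` h ` (F ` U)"
    proof
      fix a assume a: "a \<in> U"
      then have "F a \<in> F ` U" by blast
      with hU have "h (F a) \<in> U" "F (h (F a)) = F a" by blast+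
      then have "a = h (F a) \<or> a = - h (F a)" using F a by blast
      then show "a \<in> h ` (F ` U) \<union> uminus ` h ` (F ` U)" using a by auto
    qed
    then show ?thesis using False by (meson finite_Un finite_imageI finite_subset)
  qed
  then show ?thesis using False by simp
next
  case True
  define h where "h = (\<lambda>x. SOME a. a \<in> U \<and> F a = x)"
  have hU: "h x \<in> U \<and> F (h x) = x" if "x \<in> F ` U" for x
    unfolding h_def using that by (rule imageE) (metis (mono_tags, lifting) someI)
  have Ueq: "U = h ` (F ` U) \<union> uminus ` h ` (F ` U)"
  proof
    show "U \<subseteq> h ` (F ` U) \<union> uminus ` h ` (F ` U)"
    proof
      fix a assume a: "a \<in> U"
      then have "F a \<in> F ` U" by blast
      with hU have "h (F a) \<in> U" "F (h (F a)) = F a" by blast+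
      then have "a = h (F a) \<or> a = - h (F a)" using F a by blast
      then show "a \<in> h ` (F ` U) \<union> uminus ` h ` (F ` U)" using a by auto
    qed
    show "h ` (F ` U) \<union> uminus ` h ` (F ` U) \<subseteq> U" using hU neg by auto
  qed
  have inj: "inj_on h (F ` U)"
    by (rule inj_onI) (metis hU)
  have disj: "h ` (F ` U) \<inter> uminus ` h ` (F ` U) = {}"
  proof (rule ccontr)
    assume "h ` (F ` U) \<inter> uminus ` h ` (F ` U) \<noteq> {}"
    then obtain x y where x: "x \<in> F ` U" and y: "y \<in> F ` U" and xy: "h x = - h y" by auto
    have "F (h x) = F (h y)" using F hU[OF x] hU[OF y] xy by metis
    then have "x = y" using hU[OF x] hU[OF y] by simp
    then have "h x = 0" using xy by simp
    then show False using hU[OF x] z by simp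
  qed
  have fin: "finite (F ` U)" using True by simp
  have "card U = card (h ` (F ` U)) + card (uminus ` h ` (F ` U))"
    by (subst Ueq) (rule card_Un_disjoint, use fin disj in auto)
  also have "card (uminus ` h ` (F ` U)) = card (h ` (F ` U))"
    by (rule card_image) (simp add: inj_on_def)
  also have "card (h ` (F ` U)) = card (F ` U)" using card_image[OF inj] .
  finally show ?thesis by simp
qed

lemma herm_neg_right: "herm A x (- y) = - herm A x y"
  using herm_scale_right[of A x "-1" y] by (simp add: vec_eq_iff)

lemma QB_realpt_mk: "QB A (mk p (cnjv u)) (realpt y) = herm A p y + cnj (herm A u y)"
  by (simp add: realpt_mk QB_mk)

lemma QB_realpt_neg: "QB A w (realpt (- y)) = - QB A w (realpt y)"
  by (simp add: QB_realpt herm_neg_right)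

lemma distinct_HQ:
  assumes h: "hermitian_mat A" and N: "Re (herm A r r) < 0" and sig: "signature_1n A"
    and a: "a * cnj a = 1" and b: "b * cnj b = 1" and ab: "a * a \<noteq> b * b"
  shows "\<exists>w\<in>DQ A. QB A w (realpt (a *s r)) = 0 \<and> QB A w (realpt (b *s r)) \<noteq> 0"
proof -
  define n where "n = Re (herm A r r)"
  have Nn: "herm A r r = of_real n" unfolding n_def using herm_real'[OF h] by blast
  obtain p0 where p0r: "herm A p0 r = 0" and P0: "Re (herm A p0 p0) > - 4 * n"
    using exists_hdiv_big[OF h N sig, of "- 4 * n"] by blast
  define P where "P = Re (herm A p0 p0)"
  have PP: "herm A p0 p0 = of_real P" unfolding P_def using herm_real'[OF h] by blast
  have n0: "n < 0" using N n_def by simp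
  have Ppos: "P > 0" using P0 n0 P_def by linarith
  have rp0: "herm A r p0 = 0" using herm_sym[OF h, of p0 r] p0r by simp
  define tau where "tau = - (a * a)"
  define sig' where "sig' = a * a * of_real (n / P)"
  define p where "p = p0 + r"
  define u where "u = sig' *s p0 + tau *s r"
  have aa: "a * a * (cnj a * cnj a) = 1" using a by (metis mult.commute mult.left_commute mult_1_right)
  have pr: "herm A p r = of_real n" unfolding p_def by (simp add: herm_add_left p0r Nn)
  have ur: "herm A u r = tau * of_real n" unfolding u_def by (simp add: herm_add_left herm_scale_left p0r Nn)
  have pu: "herm A p u = cnj sig' * of_real P + cnj tau * of_real n"
    unfolding p_def u_def by (simp add: herm_add_left herm_add_right herm_scale_right p0r rp0 Nn PP)
  also have "\<dots> = 0" unfolding sig'_def tau_def using Ppos by (simp add: field_simps)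
  finally have pu0: "herm A p u = 0" .
  have ppv: "herm A p p = of_real (P + n)"
    unfolding p_def by (simp add: herm_add_left herm_add_right p0r rp0 Nn PP)
  have "herm A u u = sig' * cnj sig' * of_real P + tau * cnj tau * of_real n"
    unfolding u_def by (simp add: herm_add_left herm_add_right herm_scale_left herm_scale_right p0r rp0 Nn PP algebra_simps)
  also have "sig' * cnj sig' = a * a * (cnj a * cnj a) * of_real (n / P) * of_real (n / P)"
    unfolding sig'_def by (simp add: algebra_simps)
  also have "tau * cnj tau = a * a * (cnj a * cnj a)"
    unfolding tau_def by (simp add: algebra_simps)
  finally have uuv: "herm A u u = of_real (n / P * (n / P) * P + n)" unfolding aa by simp
  have Re_pp: "0 < Re (herm A p p)" unfolding ppv using P0 P_def n0 by simp
  have e: "n / P * (n / P) * P = n * n / P" using Ppos by (simp add: field_simps)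
  have nn: "0 \<le> n * n / P" using Ppos by simp
  have P0': "- 4 * n < P" using P0 P_def by simp
  have Re_sum: "0 < Re (herm A p p) + Re (herm A u u)" unfolding ppv uuv Re_complex_of_real e
    using P0' n0 nn by linarith
  have wD: "mk p (cnjv u) \<in> DQ A" by (rule path_DQ[OF h Re_pp pu0 Re_sum])
  have val: "QB A (mk p (cnjv u)) (realpt (c *s r)) = of_real n * (cnj c - c * (cnj a * cnj a))" for c
    unfolding QB_realpt_mk by (simp add: herm_scale_right pr ur tau_def algebra_simps)
  have va: "QB A (mk p (cnjv u)) (realpt (a *s r)) = 0"
  proof -
    have "cnj a - a * (cnj a * cnj a) = cnj a - (a * cnj a) * cnj a" by (simp add: algebra_simps)
    then show ?thesis unfolding val using a by simp
  qed
  have vb: "QB A (mk p (cnjv u)) (realpt (b *s r)) \<noteq> 0"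
  proof
    assume "QB A (mk p (cnjv u)) (realpt (b *s r)) = 0"
    then have e: "cnj b = b * (cnj a * cnj a)" unfolding val using n0 by simp
    have "a * a = (b * cnj b) * (a * a)" using b by simp
    also have "\<dots> = b * (b * (cnj a * cnj a)) * (a * a)" using e by simp
    also have "\<dots> = b * b * (a * a * (cnj a * cnj a))" by (simp add: algebra_simps)
    also have "\<dots> = b * b" using aa by simp
    finally show False using ab by simp
  qed
  show ?thesis using wD va vb by blast
qed

lemma QB_realpt_self: "QB A (realpt y) (realpt y) = herm A y y + cnj (herm A y y)"
  by (simp add: realpt_mk QB_mk)

lemma herm_cc: "herm A (c *s r) (c *s r) = c * cnj c * herm A r r"
  by (simp add: herm_scale_left herm_scale_right mult.assoc)

lemma cond_iff:
  assumes d: "d < 0" and h: "hermitian_mat A" and N: "Re (herm A r r) < 0" and sig: "signature_1n A"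
    and rL: "r \<in> lattice d" and rp: "primitive_OF d r"
  shows "(y \<in> lattice d \<and> primitive_Z d y \<and> QB A (realpt y) (realpt y) = QB A (realpt r) (realpt r)
          \<and> iota ` Hdiv A r \<subseteq> HQ A (realpt y)) \<longleftrightarrow> (\<exists>c \<in> unitsOF d. y = c *s r)"
proof
  assume H: "y \<in> lattice d \<and> primitive_Z d y \<and> QB A (realpt y) (realpt y) = QB A (realpt r) (realpt r)
          \<and> iota ` Hdiv A r \<subseteq> HQ A (realpt y)"
  have Y: "herm A v y = 0" if "0 < Re (herm A v v)" "herm A v r = 0" for v
  proof -
    have "v \<in> Hdiv A r" using that by (simp add: Hdiv_def DLam_def)
    then have "iota v \<in> HQ A (realpt y)" using H by blast
    then show ?thesis by (simp add: HQ_def QB_iota)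
  qed
  define c where "c = herm A y r / herm A r r"
  have yc: "y = c *s r" unfolding c_def by (rule perp_span[OF h N sig Y])
  have cO: "c \<in> OF d" using rp H yc unfolding primitive_OF_def by blast
  define n where "n = Re (herm A r r)"
  have Nn: "herm A r r = of_real n" unfolding n_def using herm_real'[OF h] by blast
  have n0: "n \<noteq> 0" using N n_def by simp
  have cc: "c * cnj c = of_real ((cmod c)^2)" by (simp only: complex_norm_square)
  have q1: "QB A (realpt y) (realpt y) = of_real (2 * ((cmod c)^2 * n))"
    unfolding QB_realpt_self yc herm_cc cc Nn by simp
  have q2: "QB A (realpt r) (realpt r) = of_real (2 * n)"
    unfolding QB_realpt_self Nn by simp
  have "complex_of_real (2 * ((cmod c)^2 * n)) = complex_of_real (2 * n)"
    using H q1 q2 by metis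
  then have "2 * ((cmod c)^2 * n) = 2 * n" by (simp only: of_real_eq_iff)
  then have "(cmod c)^2 * n = n" by simp
  then have "(cmod c)^2 = 1" using n0 by simp
  then have "c * cnj c = 1" using cc by simp
  then have "c \<in> unitsOF d" using units_iff[OF d] cO by blast
  then show "\<exists>c \<in> unitsOF d. y = c *s r" using yc by blast
next
  assume "\<exists>c \<in> unitsOF d. y = c *s r"
  then obtain c where cU: "c \<in> unitsOF d" and yc: "y = c *s r" by blast
  have cO: "c \<in> OF d" and cc: "c * cnj c = 1" using cU units_iff[OF d] by blast+
  have c0: "c \<noteq> 0" using cc by auto
  have r0: "r \<noteq> 0" using rp unfolding primitive_OF_def by blast
  have yL: "y \<in> lattice d" using rL cO OF_mult[OF d] unfolding lattice_def yc by simp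
  have "y \<noteq> 0" unfolding yc using c0 r0 by (simp add: vec_eq_iff)
  moreover have "t \<in> \<int>" if tL: "complex_of_real t *s y \<in> lattice d" for t
  proof -
    have "(complex_of_real t * c) *s r \<in> lattice d" using tL unfolding yc by (simp add: vector_smult_assoc)
    then have "complex_of_real t * c \<in> OF d" using rp unfolding primitive_OF_def by blast
    then have "complex_of_real t * c * cnj c \<in> OF d" using OF_mult[OF d] OF_cnj[OF d cO] by blast
    then have tO: "complex_of_real t \<in> OF d" using cc by (simp add: mult.assoc)
    have "complex_of_real t = of_int \<lfloor>Re (complex_of_real t)\<rfloor>" using OF_real[OF d tO] by simp
    then have "t = of_int \<lfloor>t\<rfloor>" by (metis Re_complex_of_real of_real_of_int_eq)
    then show ?thesis by (metis Ints_of_int)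
  qed
  ultimately have pZ: "primitive_Z d y" unfolding primitive_Z_def by blast
  have QBe: "QB A (realpt y) (realpt y) = QB A (realpt r) (realpt r)"
    unfolding QB_realpt_self yc herm_cc cc by simp
  have "iota ` Hdiv A r \<subseteq> HQ A (realpt y)"
  proof
    fix w assume "w \<in> iota ` Hdiv A r"
    then obtain v where v: "v \<in> Hdiv A r" and w: "w = iota v" by blast
    have "iota v \<in> DQ A" using v iota_DQ[OF h] by (simp add: Hdiv_def)
    moreover have "QB A (iota v) (realpt y) = 0" using v
      by (simp add: QB_iota yc herm_scale_right Hdiv_def)
    ultimately show "w \<in> HQ A (realpt y)" unfolding w HQ_def by simp
  qed
  then show "y \<in> lattice d \<and> primitive_Z d y \<and> QB A (realpt y) (realpt y) = QB A (realpt r) (realpt r)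
          \<and> iota ` Hdiv A r \<subseteq> HQ A (realpt y)" using yL pZ QBe by blast
qed

lemma HQ_neg: "HQ A (realpt ((- a) *s r)) = HQ A (realpt (a *s r))"
proof -
  have "(- a) *s r = - (a *s r)" by (simp add: vec_eq_iff)
  then show ?thesis unfolding HQ_def by (simp only: QB_realpt_neg neg_equal_0_iff_equal)
qed

lemma sq_ne: "b \<noteq> a \<Longrightarrow> b \<noteq> - a \<Longrightarrow> a * a \<noteq> (b::complex) * b"
proof
  assume "b \<noteq> a" "b \<noteq> - a" "a * a = b * b"
  then have "(b - a) * (b + a) = 0" by (simp add: algebra_simps)
  then have "b - a = 0 \<or> b + a = 0" by simp
  then show False using \<open>b \<noteq> a\<close> \<open>b \<noteq> - a\<close> by (auto simp: add_eq_0_iff2)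
qed

lemma scaleR_vec_smult: "(t *\<^sub>R (x::complex^'m)) = complex_of_real t *s x"
proof -
  have sc: "t *\<^sub>R (z::complex) = of_real t * z" for z by (simp add: scaleR_conv_of_real)
  show ?thesis by (simp add: vec_eq_iff sc)
qed

theorem lemma3p23:
  fixes d :: int and A :: "complex^'m^'m" and r :: "complex^'m"
  assumes "d < 0" and "squarefree d"
    and "herm_lattice d A" and "signature_1n A"
    and "r \<in> lattice d" and "primitive_OF d r" and "Re (herm A r r) < 0"
  shows "card {HQ A (realpt y) | y. y \<in> lattice d \<and> primitive_Z d y
              \<and> QB A (realpt y) (realpt y) = QB A (realpt r) (realpt r)
              \<and> iota ` Hdiv A r \<subseteq> HQ A (realpt y)} = card (unitsOF d) div 2
         \<and> {v \<in> DLam A. iota v \<in> HQ A (realpt r)} = Hdiv A r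
         \<and> vanishes_simply (\<lambda>v. QB A (iota v) (realpt r)) (Hdiv A r)"
proof -
  note d = assms(1) and sig = assms(4) and rL = assms(5) and rp = assms(6) and N = assms(7)
  have h: "hermitian_mat A" using assms(3) unfolding herm_lattice_def by blast
  define F where "F = (\<lambda>c. HQ A (realpt (c *s r)))"
  have seteq: "{HQ A (realpt y) | y. y \<in> lattice d \<and> primitive_Z d y
              \<and> QB A (realpt y) (realpt y) = QB A (realpt r) (realpt r)
              \<and> iota ` Hdiv A r \<subseteq> HQ A (realpt y)} = F ` unitsOF d"
  proof -
    define Pr where "Pr y \<longleftrightarrow> (y \<in> lattice d \<and> primitive_Z d y
              \<and> QB A (realpt y) (realpt y) = QB A (realpt r) (realpt r)
              \<and> iota ` Hdiv A r \<subseteq> HQ A (realpt y))" for y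
    have ci: "Pr y \<longleftrightarrow> (\<exists>c\<in>unitsOF d. y = c *s r)" for y
      unfolding Pr_def by (rule cond_iff[OF d h N sig rL rp])
    have "{HQ A (realpt y) | y. Pr y} = F ` unitsOF d"
      unfolding ci F_def by blast
    then show ?thesis unfolding Pr_def .
  qed
  have neg: "\<forall>a\<in>unitsOF d. -a \<in> unitsOF d"
  proof
    fix a assume "a \<in> unitsOF d"
    then have "a \<in> OF d" "a * cnj a = 1" using units_iff[OF d] by blast+
    then have "- a \<in> OF d" "(- a) * cnj (- a) = 1" using OF_uminus by auto
    then show "- a \<in> unitsOF d" using units_iff[OF d] by blast
  qed
  have z: "0 \<notin> unitsOF d" using units_iff[OF d, of 0] by simp
  have Feq: "\<forall>a\<in>unitsOF d. \<forall>b\<in>unitsOF d. F a = F b \<longleftrightarrow> (b = a \<or> b = -a)"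
  proof (intro ballI iffI)
    fix a b assume aU: "a \<in> unitsOF d" and bU: "b \<in> unitsOF d"
    {
      assume "b = a \<or> b = -a"
      then show "F a = F b"
      proof
        assume "b = a" then show ?thesis by simp
      next
        assume "b = -a"
        then show ?thesis unfolding F_def using HQ_neg[of A a r] by simp
      qed
    }
    assume FF: "F a = F b"
    show "b = a \<or> b = -a"
    proof (rule ccontr)
      assume nb: "\<not> (b = a \<or> b = -a)"
      have ab: "a * a \<noteq> b * b" using nb sq_ne by blast
      have a1: "a * cnj a = 1" using aU units_iff[OF d] by blast
      have b1: "b * cnj b = 1" using bU units_iff[OF d] by blast
      obtain w where "w \<in> DQ A" "QB A w (realpt (a *s r)) = 0" "QB A w (realpt (b *s r)) \<noteq> 0"
        using distinct_HQ[OF h N sig a1 b1 ab] by blast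
      then have "w \<in> F a" "w \<notin> F b" unfolding F_def HQ_def by auto
      then show False using FF by simp
    qed
  qed
  have part1: "card {HQ A (realpt y) | y. y \<in> lattice d \<and> primitive_Z d y
              \<and> QB A (realpt y) (realpt y) = QB A (realpt r) (realpt r)
              \<and> iota ` Hdiv A r \<subseteq> HQ A (realpt y)} = card (unitsOF d) div 2"
    unfolding seteq by (rule card_2to1[OF neg z Feq])
  have part2: "{v \<in> DLam A. iota v \<in> HQ A (realpt r)} = Hdiv A r"
    using iota_DQ[OF h] by (auto simp: HQ_def Hdiv_def QB_iota)
  have g: "(\<lambda>v. QB A (iota v) (realpt r)) = (\<lambda>v. herm A v r)" by (simp add: QB_iota)
  have lin: "linear (\<lambda>v. herm A v r)"
    by (rule linearI) (simp_all add: herm_add_left scaleR_vec_smult herm_scale_left scaleR_conv_of_real)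
  have bl: "bounded_linear (\<lambda>v. herm A v r)" using lin linear_conv_bounded_linear by blast
  have der: "((\<lambda>v. herm A v r) has_derivative (\<lambda>v. herm A v r)) (at v)" for v
    using bounded_linear.has_derivative[OF bl has_derivative_ident] by simp
  have "herm A r r \<noteq> 0" using N by auto
  then have part3: "vanishes_simply (\<lambda>v. QB A (iota v) (realpt r)) (Hdiv A r)"
    unfolding vanishes_simply_def g using der by (auto simp: Hdiv_def)
  show ?thesis using part1 part2 part3 by blast
qed

end
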